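(* Consider equation (E) and assume each $\tau_i$ is non-decreasing. If $$\limsup_{t\to+\infty}\prod_{j=1}^{m}\bigg(\prod_{i=1}^{m}\int_{\tau_j(t)}^{t}p_i(s)\,ds\bigg)^{1/m}>\frac{1}{m^{m}},$$ then all solutions of (E) oscillate.
   Context: Equation (E) is $x'(t)+\sum_{i=1}^{m}p_i(t)\,x(\tau_i(t))=0$, $t\ge t_0$, where $m\ge1$ is an integer and, for each $i$, $p_i,\tau_i:[t_0,\infty)\to[0,\infty)$ are continuous, $\tau_i(t)\le t$ for $t\ge t_0$, and $\lim_{t\to\infty}\tau_i(t)=\infty$. Let $\tau(t)=\min_i\tau_i(t)$ and $\tau_{(-1)}(t)=\sup\{s:\tau(s)\le t\}$. A solution of (E) is a function $x\in C([T_0,\infty);\mathbb{R})$ for some $T_0\ge t_0$ which is continuously differentiable on $[\tau_{(-1)}(T_0),\infty)$ and satisfies (E) for $t\ge\tau_{(-1)}(T_0)$. A solution is oscillatory if it has arbitrarily large zeros; "all solutions oscillate" means every solution is oscillatory. *)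

theory Defs
  imports "HOL-Analysis.Analysis"
begin

text \<open>Equation (E):  x'(t) + sum_{i=1}^m p_i(t) x(tau_i(t)) = 0, t >= t0.
  Coefficients and delays are indexed by i in {1..m}.\<close>

definition min_delay :: "nat \<Rightarrow> (nat \<Rightarrow> real \<Rightarrow> real) \<Rightarrow> real \<Rightarrow> real" where
  "min_delay m \<tau> t = Min ((\<lambda>i. \<tau> i t) ` {1..m})"

definition delay_inv :: "real \<Rightarrow> nat \<Rightarrow> (nat \<Rightarrow> real \<Rightarrow> real) \<Rightarrow> real \<Rightarrow> real" where
  "delay_inv t0 m \<tau> T = Sup {s. s \<ge> t0 \<and> min_delay m \<tau> s \<le> T}"

definition is_solution ::
  "real \<Rightarrow> nat \<Rightarrow> (nat \<Rightarrow> real \<Rightarrow> real) \<Rightarrow> (nat \<Rightarrow> real \<Rightarrow> real) \<Rightarrow> (real \<Rightarrow> real) \<Rightarrow> bool" where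
  "is_solution t0 m p \<tau> x \<longleftrightarrow>
     (\<exists>T0 x'. T0 \<ge> t0 \<and> continuous_on {T0..} x \<and>
        continuous_on {delay_inv t0 m \<tau> T0..} x' \<and>
        (\<forall>t \<ge> delay_inv t0 m \<tau> T0.
            (x has_real_derivative x' t) (at t within {delay_inv t0 m \<tau> T0..}) \<and>
            x' t + (\<Sum>i\<in>{1..m}. p i t * x (\<tau> i t)) = 0))"

definition oscillatory :: "(real \<Rightarrow> real) \<Rightarrow> bool" where
  "oscillatory x \<longleftrightarrow> (\<forall>T. \<exists>t \<ge> T. x t = 0)"

end

theory Submission
  imports Defs
begin

lemma alg:
  fixes A :: "nat \<Rightarrow> nat \<Rightarrow> real" and y :: "nat \<Rightarrow> real" and m :: nat
  assumes m: "m \<ge> 1" and A: "\<And>i j. i\<in>{1..m} \<Longrightarrow> j\<in>{1..m} \<Longrightarrow> A i j \<ge> 0"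
    and y: "\<And>i. i\<in>{1..m} \<Longrightarrow> y i > 0"
    and S: "\<And>j. j\<in>{1..m} \<Longrightarrow> (\<Sum>i\<in>{1..m}. A i j * y i) \<le> y j"
  shows "(\<Prod>j\<in>{1..m}. (\<Prod>i\<in>{1..m}. A i j) powr (1/real m)) \<le> 1 / real m ^ m"
proof -
  define Y where "Y = (\<Prod>i\<in>{1..m}. y i)"
  have Ypos: "Y > 0" unfolding Y_def by (rule prod_pos) (use y in auto)
  have mpos: "real m > 0" using m by simp
  have each: "(\<Prod>i\<in>{1..m}. A i j) powr (1/real m) * Y powr (1/real m) \<le> y j / real m"
    if j: "j \<in> {1..m}" for j
  proof -
    have "(\<Prod>i\<in>{1..m}. A i j * y i) powr (1 / card {1..m}) \<le> (\<Sum>i\<in>{1..m}. A i j * y i / card {1..m})"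
      proof (rule arith_geom_mean)
      show "{1..m} \<noteq> {}" using m by simp
      fix i assume "i \<in> {1..m}" then show "0 \<le> A i j * y i" using A[of i j] y[of i] j by (simp add: less_imp_le)
    qed simp
    also have "\<dots> = (\<Sum>i\<in>{1..m}. A i j * y i) / real m" by (simp add: sum_divide_distrib)
    also have "\<dots> \<le> y j / real m" using S[OF j] mpos by (simp add: divide_right_mono)
    finally have "(\<Prod>i\<in>{1..m}. A i j * y i) powr (1 / real m) \<le> y j / real m" by simp
    moreover have "(\<Prod>i\<in>{1..m}. A i j * y i) = (\<Prod>i\<in>{1..m}. A i j) * Y"
      unfolding Y_def by (simp add: prod.distrib)
    moreover have "((\<Prod>i\<in>{1..m}. A i j) * Y) powr (1/real m) = (\<Prod>i\<in>{1..m}. A i j) powr (1/real m) * Y powr (1/real m)"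
      using Ypos A j by (intro powr_mult prod_nonneg; auto)
    ultimately show ?thesis by simp
  qed
  have "(\<Prod>j\<in>{1..m}. (\<Prod>i\<in>{1..m}. A i j) powr (1/real m) * Y powr (1/real m)) \<le> (\<Prod>j\<in>{1..m}. y j / real m)"
    by (rule prod_mono) (use each Ypos in auto)
  also have "\<dots> = Y / real m ^ m" unfolding Y_def by (simp add: prod_dividef)
  also have "(\<Prod>j\<in>{1..m}. (\<Prod>i\<in>{1..m}. A i j) powr (1/real m) * Y powr (1/real m))
     = (\<Prod>j\<in>{1..m}. (\<Prod>i\<in>{1..m}. A i j) powr (1/real m)) * (Y powr (1/real m)) ^ m"
    by (simp add: prod.distrib)
  also have "(Y powr (1/real m)) ^ m = Y"
    using Ypos mpos by (simp add: powr_realpow[symmetric] powr_powr)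
  finally have "Y * (\<Prod>j\<in>{1..m}. (\<Prod>i\<in>{1..m}. A i j) powr (1/real m)) \<le> Y * (1 / real m ^ m)"
    by (simp add: mult.commute)
  then show ?thesis using Ypos mult_le_cancel_left_pos by blast
qed
lemma ev_tau:
  fixes m :: nat and \<tau> :: "nat \<Rightarrow> real \<Rightarrow> real"
  assumes tau_lim: "\<And>i. i \<in> {1..m} \<Longrightarrow> filterlim (\<tau> i) at_top at_top"
  shows "\<exists>N. \<forall>t\<ge>N. \<forall>i\<in>{1..m}. \<tau> i t \<ge> S"
proof -
  have "eventually (\<lambda>t. \<forall>i\<in>{1..m}. \<tau> i t \<ge> S) at_top"
    by (rule eventually_ball_finite) (use tau_lim in \<open>auto simp: filterlim_at_top\<close>)
  then show ?thesis by (simp add: eventually_at_top_linorder)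
qed

lemma core:
  fixes m :: nat and p \<tau> :: "nat \<Rightarrow> real \<Rightarrow> real" and x x' :: "real \<Rightarrow> real" and Ta t0 :: real
  assumes m_pos: "m \<ge> 1"
    and p_cont: "\<And>i. i \<in> {1..m} \<Longrightarrow> continuous_on {t0..} (p i)"
    and p_nonneg: "\<And>i t. i \<in> {1..m} \<Longrightarrow> t \<ge> t0 \<Longrightarrow> p i t \<ge> 0"
    and tau_le: "\<And>i t. i \<in> {1..m} \<Longrightarrow> t \<ge> t0 \<Longrightarrow> \<tau> i t \<le> t"
    and tau_lim: "\<And>i. i \<in> {1..m} \<Longrightarrow> filterlim (\<tau> i) at_top at_top"
    and tau_mono: "\<And>i. i \<in> {1..m} \<Longrightarrow> mono_on {t0..} (\<tau> i)"
    and Ta: "Ta \<ge> t0"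
    and sol: "\<And>t. t \<ge> Ta \<Longrightarrow> (x has_real_derivative x' t) (at t) \<and>
                 x' t + (\<Sum>i\<in>{1..m}. p i t * x (\<tau> i t)) = 0 \<and> x t > 0"
  shows "eventually (\<lambda>t. (\<Prod>j\<in>{1..m}. (\<Prod>i\<in>{1..m}. integral {\<tau> j t..t} (p i)) powr (1/real m))
            \<le> 1 / real m ^ m) at_top"
proof -
  obtain N2 where N2: "\<And>t i. t \<ge> N2 \<Longrightarrow> i\<in>{1..m} \<Longrightarrow> \<tau> i t \<ge> Ta"
    using ev_tau[of m \<tau> Ta, OF tau_lim] by blast
  define T2 where "T2 = max N2 Ta"
  have T2: "T2 \<ge> Ta" "T2 \<ge> t0" using Ta unfolding T2_def by auto
  have x'neg: "x' t \<le> 0" if "t \<ge> T2" for t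
  proof -
    have "(\<Sum>i\<in>{1..m}. p i t * x (\<tau> i t)) \<ge> 0"
      using that T2 N2[of t] sol p_nonneg unfolding T2_def
      by (intro sum_nonneg mult_nonneg_nonneg) (auto intro: less_imp_le)
    then show ?thesis using sol[of t] that T2 by linarith
  qed
  have anti: "x b \<le> x a" if "T2 \<le> a" "a \<le> b" for a b
    by (rule DERIV_nonpos_imp_nonincreasing[OF \<open>a \<le> b\<close>])
       (use that sol T2 x'neg in \<open>meson order_trans\<close>)
  obtain N3 where N3: "\<And>t i. t \<ge> N3 \<Longrightarrow> i\<in>{1..m} \<Longrightarrow> \<tau> i t \<ge> T2"
    using ev_tau[of m \<tau> T2, OF tau_lim] by blast
  define T3 where "T3 = max N3 T2"
  have T3: "T3 \<ge> T2" unfolding T3_def by auto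
  obtain N4 where N4: "\<And>t i. t \<ge> N4 \<Longrightarrow> i\<in>{1..m} \<Longrightarrow> \<tau> i t \<ge> T3"
    using ev_tau[of m \<tau> T3, OF tau_lim] by blast
  define T4 where "T4 = max N4 T3"
  have "(\<Prod>j\<in>{1..m}. (\<Prod>i\<in>{1..m}. integral {\<tau> j t..t} (p i)) powr (1/real m)) \<le> 1 / real m ^ m"
    if t: "t \<ge> T4" for t
  proof (rule alg[OF m_pos])
    have tT3: "t \<ge> T3" "t \<ge> t0" using t T3 T2 unfolding T4_def by auto
    have tauT3: "\<tau> i t \<ge> T3" if "i \<in> {1..m}" for i using N4[OF _ that, of t] t unfolding T4_def by auto
    have pint: "p i integrable_on {\<tau> j t..t}" if "i \<in> {1..m}" "j \<in> {1..m}" for i j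
      by (rule integrable_continuous_interval, rule continuous_on_subset[OF p_cont[OF that(1)]])
         (use tauT3[OF that(2)] T3 T2 in auto)
    show "0 \<le> integral {\<tau> j t..t} (p i)" if "i \<in> {1..m}" "j \<in> {1..m}" for i j
      by (rule integral_nonneg[OF pint[OF that]]) (use tauT3[OF that(2)] T3 T2 p_nonneg that in auto)
    show "0 < x (\<tau> i t)" if "i \<in> {1..m}" for i using sol tauT3[OF that] T3 T2 by auto
    show "(\<Sum>i\<in>{1..m}. integral {\<tau> j t..t} (p i) * x (\<tau> i t)) \<le> x (\<tau> j t)" if j: "j \<in> {1..m}" for j
    proof -
      define a where "a = \<tau> j t"
      have aT3: "a \<ge> T3" using tauT3[OF j] a_def by simp
      have at: "a \<le> t" using tau_le[OF j tT3(2)] a_def by simp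
      have ftc: "(x' has_integral (x t - x a)) {a..t}"
      proof (rule fundamental_theorem_of_calculus[OF at])
        fix s assume "s \<in> {a..t}"
        then have "s \<ge> Ta" using aT3 T3 T2 by auto
        then have "(x has_real_derivative x' s) (at s)" using sol by blast
        then have "(x has_real_derivative x' s) (at s within {a..t})" by (rule has_field_derivative_at_within)
        then show "(x has_vector_derivative x' s) (at s within {a..t})"
          by (simp add: has_real_derivative_iff_has_vector_derivative)
      qed
      have g: "((\<lambda>s. - x' s) has_integral (x a - x t)) {a..t}"
        using has_integral_neg[OF ftc] by simp
      have f: "((\<lambda>s. \<Sum>i\<in>{1..m}. p i s * x (\<tau> i t)) has_integral
               (\<Sum>i\<in>{1..m}. integral {a..t} (p i) * x (\<tau> i t))) {a..t}"
        by (rule has_integral_sum) (use pint j in \<open>auto simp: a_def intro!: has_integral_mult_left\<close>)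
      have "(\<Sum>i\<in>{1..m}. integral {a..t} (p i) * x (\<tau> i t)) \<le> x a - x t"
      proof (rule has_integral_le[OF f g])
        fix s assume s: "s \<in> {a..t}"
        have sT3: "s \<ge> T3" and st: "s \<le> t" using s aT3 by auto
        have "(\<Sum>i\<in>{1..m}. p i s * x (\<tau> i t)) \<le> (\<Sum>i\<in>{1..m}. p i s * x (\<tau> i s))"
        proof (rule sum_mono, rule mult_left_mono)
          fix i assume i: "i \<in> {1..m}"
          show "0 \<le> p i s" using p_nonneg[OF i] sT3 T3 T2 by auto
          have "\<tau> i s \<le> \<tau> i t" using tau_mono[OF i] sT3 T3 T2 st
            by (auto intro: mono_onD)
          moreover have "\<tau> i s \<ge> T2" using N3[OF _ i, of s] sT3 unfolding T3_def by auto
          ultimately show "x (\<tau> i t) \<le> x (\<tau> i s)" using anti by blast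
        qed
        also have "\<dots> = - x' s" using sol[of s] sT3 T3 T2 by linarith
        finally show "(\<Sum>i\<in>{1..m}. p i s * x (\<tau> i t)) \<le> - x' s" .
      qed
      moreover have "x t > 0" using sol tT3 T3 T2 by auto
      ultimately show ?thesis unfolding a_def by linarith
    qed
  qed
  then show ?thesis by (auto simp: eventually_at_top_linorder)
qed

theorem corollary3p3:
  fixes t0 :: real and m :: nat
    and p \<tau> :: "nat \<Rightarrow> real \<Rightarrow> real"
  assumes m_pos: "m \<ge> 1"
    and p_cont: "\<And>i. i \<in> {1..m} \<Longrightarrow> continuous_on {t0..} (p i)"
    and tau_cont: "\<And>i. i \<in> {1..m} \<Longrightarrow> continuous_on {t0..} (\<tau> i)"
    and p_nonneg: "\<And>i t. i \<in> {1..m} \<Longrightarrow> t \<ge> t0 \<Longrightarrow> p i t \<ge> 0"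
    and tau_nonneg: "\<And>i t. i \<in> {1..m} \<Longrightarrow> t \<ge> t0 \<Longrightarrow> \<tau> i t \<ge> 0"
    and tau_le: "\<And>i t. i \<in> {1..m} \<Longrightarrow> t \<ge> t0 \<Longrightarrow> \<tau> i t \<le> t"
    and tau_lim: "\<And>i. i \<in> {1..m} \<Longrightarrow> filterlim (\<tau> i) at_top at_top"
    and tau_mono: "\<And>i. i \<in> {1..m} \<Longrightarrow> mono_on {t0..} (\<tau> i)"
    and cond: "Limsup at_top (\<lambda>t. ereal (\<Prod>j\<in>{1..m}.
                  (\<Prod>i\<in>{1..m}. integral {\<tau> j t..t} (p i)) powr (1 / real m)))
               > ereal (1 / real m ^ m)"
  shows "\<forall>x. is_solution t0 m p \<tau> x \<longrightarrow> oscillatory x"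
proof (intro allI impI)
  fix x assume "is_solution t0 m p \<tau> x"
  then obtain T0 x' where T0: "T0 \<ge> t0"
    and D: "\<And>t. t \<ge> delay_inv t0 m \<tau> T0 \<Longrightarrow>
            (x has_real_derivative x' t) (at t within {delay_inv t0 m \<tau> T0..}) \<and>
            x' t + (\<Sum>i\<in>{1..m}. p i t * x (\<tau> i t)) = 0"
    unfolding is_solution_def by blast
  define T1 where "T1 = delay_inv t0 m \<tau> T0"
  show "oscillatory x"
  proof (rule ccontr)
    assume "\<not> oscillatory x"
    then obtain T where T: "\<And>t. t \<ge> T \<Longrightarrow> x t \<noteq> 0" unfolding oscillatory_def by (meson not_le less_imp_le)
    define Ta where "Ta = max (max T t0) (T1 + 1)"
    have Ta: "Ta \<ge> t0" "Ta \<ge> T" "Ta > T1" unfolding Ta_def by auto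
    have Dat: "(x has_real_derivative x' t) (at t) \<and> x' t + (\<Sum>i\<in>{1..m}. p i t * x (\<tau> i t)) = 0"
      if "t \<ge> Ta" for t
    proof -
      have "t \<in> interior {T1..}" using that Ta by simp
      then have "at t within {T1..} = at t" by (rule at_within_interior)
      then show ?thesis using D[of t] that Ta unfolding T1_def[symmetric] by auto
    qed
    have xcont: "continuous_on {a..b} x" if "a \<ge> Ta" for a b
    proof (rule continuous_at_imp_continuous_on, rule ballI)
      fix s assume "s \<in> {a..b}"
      then have "s \<ge> Ta" using that by auto
      then show "isCont x s" using Dat by (meson DERIV_isCont)
    qed
    have evb: "eventually (\<lambda>t. (\<Prod>j\<in>{1..m}. (\<Prod>i\<in>{1..m}. integral {\<tau> j t..t} (p i)) powr (1/real m))
            \<le> 1 / real m ^ m) at_top"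
    proof (cases "x Ta > 0")
      case True
      have pos: "x t > 0" if "t \<ge> Ta" for t
      proof (rule ccontr)
        assume "\<not> x t > 0"
        then have "x t \<le> 0" by simp
        from IVT2'[where f=x and a=Ta and b=t and y=0, OF this _ that xcont[OF order_refl]] True obtain s where "Ta \<le> s" "x s = 0" by auto
        then show False using T Ta by force
      qed
      show ?thesis
        by (rule core[OF m_pos p_cont p_nonneg tau_le tau_lim tau_mono Ta(1), where x=x and x'=x']) (use Dat pos in auto)
    next
      case False
      then have "x Ta < 0" using T[of Ta] Ta by force
      have neg: "x t < 0" if "t \<ge> Ta" for t
      proof (rule ccontr)
        assume "\<not> x t < 0"
        then have "0 \<le> x t" by simp
        from IVT'[where f=x and a=Ta and b=t and y=0, OF _ this that xcont[OF order_refl]] \<open>x Ta < 0\<close> obtain s where "Ta \<le> s" "x s = 0" by auto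
        then show False using T Ta by force
      qed
      show ?thesis
      proof (rule core[OF m_pos p_cont p_nonneg tau_le tau_lim tau_mono Ta(1), where x="\<lambda>t. - x t" and x'="\<lambda>t. - x' t"])
        fix t assume t: "t \<ge> Ta"
        have "((\<lambda>t. - x t) has_real_derivative - x' t) (at t)" using Dat[OF t] by (auto intro: DERIV_minus)
        moreover have "- x' t + (\<Sum>i\<in>{1..m}. p i t * - x (\<tau> i t)) = 0"
          using Dat[OF t] by (simp add: sum_negf)
        ultimately show "((\<lambda>t. - x t) has_real_derivative - x' t) (at t) \<and>
          - x' t + (\<Sum>i\<in>{1..m}. p i t * - x (\<tau> i t)) = 0 \<and> 0 < - x t"
          using neg[OF t] by simp
      qed
    qed
    have "Limsup at_top (\<lambda>t. ereal (\<Prod>j\<in>{1..m}.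
                  (\<Prod>i\<in>{1..m}. integral {\<tau> j t..t} (p i)) powr (1 / real m))) \<le> ereal (1 / real m ^ m)"
      by (rule Limsup_bounded) (use evb in \<open>simp add: eventually_mono\<close>)
    then show False using cond by simp
  qed
qed

end
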